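(* Let $\psi_0=1$, $\psi_j(x)=\sqrt2\cos(\pi jx)$ for $j\ge1$, let $\gamma>1/2$, $C>0$, and let $X$ have density $p=1+\sum_{j\ge1}\beta_j\psi_j\in\mathcal P(\gamma,C)$ on $[0,1]$. For $k\ge1$ let $m_k=\lfloor k^{1/(2\gamma+1)}\rfloor$, let $\Sigma_k$ be the covariance matrix of the random vector $(\psi_1(X),\dots,\psi_{m_k}(X))^T$, and let $\lambda_k$ be the largest eigenvalue of $\Sigma_k$. Then $\limsup_{k\to\infty}\lambda_k<\infty$.
   Context: Sobolev class: for $\gamma>1/2$, $C>0$, $\mathcal B(\gamma,C)=\{\beta=(\beta_1,\beta_2,\dots):\sum_{j\ge1}\beta_j^2j^{2\gamma}\le C^2\}$ and $\mathcal P(\gamma,C)=\{p=1+\sum_{j\ge1}\beta_j\psi_j:\beta\in\mathcal B(\gamma,C)\}$ (densities on $[0,1]$). *)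

theory Defs
  imports "HOL-Probability.Probability" "Jordan_Normal_Form.Char_Poly"
begin

definition cos_basis :: "nat \<Rightarrow> real \<Rightarrow> real" where
  "cos_basis j x = (if j = 0 then 1 else sqrt 2 * cos (pi * real j * x))"

text \<open>Sobolev ellipsoid B(gamma,C); the sequence beta_1, beta_2, ... is stored as
  beta 1, beta 2, ... (the value beta 0 is irrelevant).\<close>
definition sobolev_ball :: "real \<Rightarrow> real \<Rightarrow> (nat \<Rightarrow> real) set" where
  "sobolev_ball \<gamma> C = {\<beta>. summable (\<lambda>j. (\<beta> (Suc j))\<^sup>2 * real (Suc j) powr (2 * \<gamma>)) \<and>
      (\<Sum>j. (\<beta> (Suc j))\<^sup>2 * real (Suc j) powr (2 * \<gamma>)) \<le> C\<^sup>2}"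

definition cos_series :: "(nat \<Rightarrow> real) \<Rightarrow> real \<Rightarrow> real" where
  "cos_series \<beta> x = 1 + (\<Sum>j. \<beta> (Suc j) * cos_basis (Suc j) x)"

definition covariance :: "'a measure \<Rightarrow> ('a \<Rightarrow> real) \<Rightarrow> ('a \<Rightarrow> real) \<Rightarrow> real" where
  "covariance M f g =
     (LINT \<omega>|M. (f \<omega> - (LINT \<eta>|M. f \<eta>)) * (g \<omega> - (LINT \<eta>|M. g \<eta>)))"

text \<open>Covariance matrix of (psi_1(X), ..., psi_m(X)); row/column index i stands for psi_(i+1).\<close>
definition cos_cov_mat :: "'a measure \<Rightarrow> ('a \<Rightarrow> real) \<Rightarrow> nat \<Rightarrow> real mat" where
  "cos_cov_mat M X m = mat m m (\<lambda>(i, l).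
      covariance M (\<lambda>\<omega>. cos_basis (Suc i) (X \<omega>)) (\<lambda>\<omega>. cos_basis (Suc l) (X \<omega>)))"

definition largest_eigenvalue :: "real mat \<Rightarrow> real" where
  "largest_eigenvalue A = Max {e. eigenvalue A e}"

end

theory Submission imports Defs begin

lemma Max_bound_any:
  fixes S :: "real set"
  assumes "\<forall>e\<in>S. e \<le> B"
  shows "Max S \<le> max B (Max {})"
proof (cases "finite S \<and> S \<noteq> {}")
  case True thus ?thesis using assms by (auto simp: Max_le_iff le_max_iff_disj)
next
  case False
  hence "Max S = Max {}"
    by (auto simp: Max.eq_fold' fold_infinite)
  thus ?thesis by simp
qed

lemma cos_basis_bound: "\<bar>cos_basis j x\<bar> \<le> sqrt 2"
proof -
  have "\<bar>cos (pi * real j * x)\<bar> \<le> 1" by simp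
  hence "sqrt 2 * \<bar>cos (pi * real j * x)\<bar> \<le> sqrt 2" by simp
  moreover have "(1::real) \<le> sqrt 2" by simp
  ultimately show ?thesis by (auto simp: cos_basis_def abs_mult)
qed

lemma cos_basis_meas[measurable]: "cos_basis j \<in> borel_measurable borel"
  unfolding cos_basis_def by (cases "j = 0") (auto intro!: borel_measurable_continuous_onI continuous_intros)

lemma sobolev_abs_summable:
  assumes g: "\<gamma> > 1/2" and b: "\<beta> \<in> sobolev_ball \<gamma> C"
  shows "summable (\<lambda>j. \<bar>\<beta> (Suc j)\<bar>)"
proof -
  let ?a = "\<lambda>j. (\<beta> (Suc j))\<^sup>2 * real (Suc j) powr (2 * \<gamma>)"
  have sa: "summable ?a" using b by (simp add: sobolev_ball_def)
  have "summable (\<lambda>n. real n powr (- 2 * \<gamma>))"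
    using g by (subst summable_real_powr_iff) simp
  hence sb: "summable (\<lambda>j. real (Suc j) powr (- 2 * \<gamma>))"
    by (subst summable_Suc_iff)
  have le: "\<bar>\<beta> (Suc j)\<bar> \<le> (?a j + real (Suc j) powr (- 2 * \<gamma>)) / 2" for j
  proof -
    define t where "t = real (Suc j) powr \<gamma>"
    have tp: "t > 0" unfolding t_def by simp
    have t2: "t\<^sup>2 = real (Suc j) powr (2*\<gamma>)"
      unfolding t_def by (simp add: powr_powr[symmetric] power2_eq_square powr_add[symmetric])
    have t3: "(1/t)\<^sup>2 = real (Suc j) powr (- 2*\<gamma>)"
      using t2 tp by (simp add: powr_minus power_one_over divide_simps)
    have "0 \<le> (\<bar>\<beta> (Suc j)\<bar> * t - 1/t)\<^sup>2" by simp
    hence "2 * (\<bar>\<beta> (Suc j)\<bar> * t) * (1/t) \<le> (\<bar>\<beta> (Suc j)\<bar> * t)\<^sup>2 + (1/t)\<^sup>2"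
      by (simp add: power2_diff)
    moreover have "(\<bar>\<beta> (Suc j)\<bar> * t)\<^sup>2 = ?a j" using t2 by (simp add: power_mult_distrib)
    moreover have "2 * (\<bar>\<beta> (Suc j)\<bar> * t) * (1/t) = 2 * \<bar>\<beta> (Suc j)\<bar>" using tp by simp
    ultimately show ?thesis using t3 by simp
  qed
  show ?thesis
    by (rule summable_comparison_test[where g="\<lambda>j. (?a j + real (Suc j) powr (- 2 * \<gamma>)) / 2"])
       (use le sa sb in \<open>auto intro!: summable_divide summable_add\<close>)
qed

lemma cos_series_bound:
  assumes s: "summable (\<lambda>j. \<bar>\<beta> (Suc j)\<bar>)"
  shows "\<bar>cos_series \<beta> x\<bar> \<le> 1 + sqrt 2 * (\<Sum>j. \<bar>\<beta> (Suc j)\<bar>)"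
proof -
  have le: "\<bar>\<beta> (Suc j) * cos_basis (Suc j) x\<bar> \<le> sqrt 2 * \<bar>\<beta> (Suc j)\<bar>" for j
    using cos_basis_bound[of "Suc j" x] by (simp add: abs_mult mult.commute mult_left_mono)
  have s2: "summable (\<lambda>j. sqrt 2 * \<bar>\<beta> (Suc j)\<bar>)" using s by (rule summable_mult)
  have s3: "summable (\<lambda>j. \<bar>\<beta> (Suc j) * cos_basis (Suc j) x\<bar>)"
    by (rule summable_comparison_test[OF _ s2]) (use le in auto)
  have "\<bar>\<Sum>j. \<beta> (Suc j) * cos_basis (Suc j) x\<bar> \<le> (\<Sum>j. \<bar>\<beta> (Suc j) * cos_basis (Suc j) x\<bar>)"
    by (rule summable_rabs[OF s3])
  also have "\<dots> \<le> (\<Sum>j. sqrt 2 * \<bar>\<beta> (Suc j)\<bar>)"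
    by (rule suminf_le[OF le s3 s2])
  also have "\<dots> = sqrt 2 * (\<Sum>j. \<bar>\<beta> (Suc j)\<bar>)" using suminf_mult[OF s] by simp
  finally show ?thesis unfolding cos_series_def by linarith
qed

lemma cos_series_meas[measurable]: "cos_series \<beta> \<in> borel_measurable borel"
  unfolding cos_series_def by measurable

lemma int_cos_int:
  fixes k :: int
  shows "(LINT x|lborel. indicator {0..1} x * cos (pi * of_int k * x)) = (if k = 0 then 1 else 0)"
proof (cases "k = 0")
  case True
  have "measure lborel {0..1::real} = 1" using measure_lborel_Icc[of "0::real" 1] by simp
  hence "(LINT x|lborel. indicator {0..1::real} x :: real) = 1" by simp
  thus ?thesis using True by simp
next
  case False
  hence k: "pi * of_int k \<noteq> 0" by simp
  have "(LINT x|lborel. indicator {0..1} x *\<^sub>R (\<lambda>x. cos (pi * of_int k * x)) x)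
        = (\<lambda>x. sin (pi * of_int k * x) / (pi * of_int k)) 1 - (\<lambda>x. sin (pi * of_int k * x) / (pi * of_int k)) 0"
  proof (rule integral_FTC_atLeastAtMost)
    fix x :: real
    show "((\<lambda>x. sin (pi * of_int k * x) / (pi * of_int k)) has_vector_derivative cos (pi * of_int k * x)) (at x within {0..1})"
      unfolding has_real_derivative_iff_has_vector_derivative[symmetric]
      using k by (auto intro!: derivative_eq_intros)
  qed (auto intro!: continuous_intros)
  moreover have "sin (pi * of_int k) = 0"
    by (metis mult.commute sin_times_pi_eq_0 Ints_of_int)
  ultimately show ?thesis using False by simp
qed

lemma cos_basis_prod:
  "cos_basis (Suc i) x * cos_basis (Suc l) x =
     cos (pi * of_int (int i - int l) * x) + cos (pi * of_int (int i + int l + 2) * x)"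
proof -
  define a where "a = pi * real (Suc i) * x"
  define b where "b = pi * real (Suc l) * x"
  have 1: "pi * of_int (int i - int l) * x = a - b" unfolding a_def b_def by (simp add: algebra_simps)
  have 2: "pi * of_int (int i + int l + 2) * x = a + b" unfolding a_def b_def by (simp add: algebra_simps)
  have "cos_basis (Suc i) x * cos_basis (Suc l) x = 2 * cos a * cos b"
    unfolding cos_basis_def a_def b_def by simp
  also have "\<dots> = cos (a - b) + cos (a + b)" by (simp add: cos_add cos_diff)
  finally show ?thesis using 1 2 by simp
qed

lemma cos_basis_orth:
  "(LINT x|lborel. indicator {0..1} x * (cos_basis (Suc i) x * cos_basis (Suc l) x)) = (if i = l then 1 else 0)"
proof -
  have int: "integrable lborel (\<lambda>x. indicator {0..1} x * cos (pi * of_int k * x))" for k :: int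
  proof -
    have "continuous_on {0..1} (\<lambda>x. cos (pi * of_int k * x))" by (intro continuous_intros)
    from borel_integrable_atLeastAtMost'[OF this] show ?thesis by (simp add: set_integrable_def)
  qed
  have "(LINT x|lborel. indicator {0..1} x * (cos_basis (Suc i) x * cos_basis (Suc l) x))
     = (LINT x|lborel. indicator {0..1} x * cos (pi * of_int (int i - int l) * x)
          + indicator {0..1} x * cos (pi * of_int (int i + int l + 2) * x))"
    by (simp add: cos_basis_prod distrib_left)
  also have "\<dots> = (LINT x|lborel. indicator {0..1} x * cos (pi * of_int (int i - int l) * x))
          + (LINT x|lborel. indicator {0..1} x * cos (pi * of_int (int i + int l + 2) * x))"
    by (rule Bochner_Integration.integral_add[OF int int])
  also have "\<dots> = (if i = l then 1 else 0)"
    by (simp only: int_cos_int) simp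
  finally show ?thesis .
qed

lemma eig_bound:
  assumes ps: "prob_space M"
    and d: "distributed M lborel X (\<lambda>x. ennreal (indicator {0..1} x * cos_series \<beta> x))"
    and nn: "\<forall>x\<in>{0..1}. cos_series \<beta> x \<ge> 0"
    and pb: "\<And>x. \<bar>cos_series \<beta> x\<bar> \<le> P"
    and ev: "eigenvalue (cos_cov_mat M X m) e"
  shows "e \<le> P"
proof -
  interpret prob_space M by (rule ps)
  have Xm[measurable]: "X \<in> borel_measurable M"
    using distributed_measurable[OF d] by simp
  define A where "A = cos_cov_mat M X m"
  have dimA: "dim_row A = m" unfolding A_def cos_cov_mat_def by simp
  obtain v where v: "v \<in> carrier_vec m" "v \<noteq> 0\<^sub>v m" "A *\<^sub>v v = e \<cdot>\<^sub>v v"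
    using ev unfolding eigenvalue_def eigenvector_def A_def[symmetric] dimA by blast
  have dv: "dim_vec v = m" using v(1) by simp
  define a where "a i \<omega> = cos_basis (Suc i) (X \<omega>)" for i \<omega>
  have am[measurable]: "(\<lambda>\<omega>. a i \<omega>) \<in> borel_measurable M" for i unfolding a_def by measurable
  have ab: "\<bar>a i \<omega>\<bar> \<le> sqrt 2" for i \<omega> unfolding a_def by (rule cos_basis_bound)
  have intb: "integrable M f" if "f \<in> borel_measurable M" "\<And>\<omega>. \<bar>f \<omega>\<bar> \<le> B" for f :: "_ \<Rightarrow> real" and B :: real
    by (rule integrable_const_bound[where B=B]) (use that in auto)
  have ai: "integrable M (\<lambda>\<omega>. a i \<omega>)" for i by (rule intb[OF am ab])
  define \<mu> where "\<mu> i = expectation (\<lambda>\<omega>. a i \<omega>)" for i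
  have ci: "integrable M (\<lambda>\<omega>. c1 * (a i \<omega> - \<mu> i) * (c2 * (a l \<omega> - \<mu> l)))" for c1 c2 i l
  proof (rule intb)
    show "(\<lambda>\<omega>. c1 * (a i \<omega> - \<mu> i) * (c2 * (a l \<omega> - \<mu> l))) \<in> borel_measurable M" by measurable
    fix \<omega>
    have "\<bar>a i \<omega> - \<mu> i\<bar> \<le> sqrt 2 + \<bar>\<mu> i\<bar>" using ab[of i \<omega>] by linarith
    moreover have "\<bar>a l \<omega> - \<mu> l\<bar> \<le> sqrt 2 + \<bar>\<mu> l\<bar>" using ab[of l \<omega>] by linarith
    ultimately have "\<bar>a i \<omega> - \<mu> i\<bar> * \<bar>a l \<omega> - \<mu> l\<bar> \<le> (sqrt 2 + \<bar>\<mu> i\<bar>) * (sqrt 2 + \<bar>\<mu> l\<bar>)"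
      by (intro mult_mono) auto
    hence le2: "\<bar>c1\<bar> * \<bar>c2\<bar> * (\<bar>a i \<omega> - \<mu> i\<bar> * \<bar>a l \<omega> - \<mu> l\<bar>) \<le> \<bar>c1\<bar> * \<bar>c2\<bar> * ((sqrt 2 + \<bar>\<mu> i\<bar>) * (sqrt 2 + \<bar>\<mu> l\<bar>))"
      by (intro mult_left_mono) auto
    show "\<bar>c1 * (a i \<omega> - \<mu> i) * (c2 * (a l \<omega> - \<mu> l))\<bar> \<le> \<bar>c1\<bar> * \<bar>c2\<bar> * ((sqrt 2 + \<bar>\<mu> i\<bar>) * (sqrt 2 + \<bar>\<mu> l\<bar>))"
    proof -
      have "\<bar>c1 * (a i \<omega> - \<mu> i) * (c2 * (a l \<omega> - \<mu> l))\<bar> = \<bar>c1\<bar> * \<bar>c2\<bar> * (\<bar>a i \<omega> - \<mu> i\<bar> * \<bar>a l \<omega> - \<mu> l\<bar>)"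
        by (simp add: abs_mult ac_simps)
      thus ?thesis using le2 by linarith
    qed
  qed
  have Aij: "A $$ (i, l) = expectation (\<lambda>\<omega>. (a i \<omega> - \<mu> i) * (a l \<omega> - \<mu> l))" if "i < m" "l < m" for i l
    using that unfolding A_def cos_cov_mat_def covariance_def a_def \<mu>_def by simp
  define S where "S = (\<Sum>i<m. (v $ i)\<^sup>2)"
  have step1: "v \<bullet> (A *\<^sub>v v) = e * S"
    using v(3) dv unfolding S_def by (simp add: scalar_prod_def power2_eq_square lessThan_atLeast0 algebra_simps sum_distrib_left)
  define H where "H \<omega> = (\<Sum>i<m. v $ i * (a i \<omega> - \<mu> i))" for \<omega>
  have step2: "v \<bullet> (A *\<^sub>v v) = expectation (\<lambda>\<omega>. (H \<omega>)\<^sup>2)"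
  proof -
    have "v \<bullet> (A *\<^sub>v v) = (\<Sum>i<m. \<Sum>l<m. v $ i * (A $$ (i, l) * v $ l))"
      using dv dimA A_def by (simp add: scalar_prod_def row_def lessThan_atLeast0 sum_distrib_left cos_cov_mat_def)
    also have "\<dots> = (\<Sum>i<m. \<Sum>l<m. expectation (\<lambda>\<omega>. v $ i * (a i \<omega> - \<mu> i) * (v $ l * (a l \<omega> - \<mu> l))))"
    proof (intro sum.cong refl)
      fix i l assume il: "i \<in> {..<m}" "l \<in> {..<m}"
      have "(\<lambda>\<omega>. v $ i * (a i \<omega> - \<mu> i) * (v $ l * (a l \<omega> - \<mu> l))) = (\<lambda>\<omega>. (v $ i * v $ l) * ((a i \<omega> - \<mu> i) * (a l \<omega> - \<mu> l)))"
        by (simp add: fun_eq_iff ac_simps)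
      thus "v $ i * (A $$ (i, l) * v $ l) = expectation (\<lambda>\<omega>. v $ i * (a i \<omega> - \<mu> i) * (v $ l * (a l \<omega> - \<mu> l)))"
        using il by (simp add: Aij ac_simps)
    qed
    also have "\<dots> = expectation (\<lambda>\<omega>. \<Sum>i<m. \<Sum>l<m. v $ i * (a i \<omega> - \<mu> i) * (v $ l * (a l \<omega> - \<mu> l)))"
      by (simp add: Bochner_Integration.integral_sum ci)
    also have "\<dots> = expectation (\<lambda>\<omega>. (H \<omega>)\<^sup>2)"
      unfolding H_def power2_eq_square sum_product ..
    finally show ?thesis .
  qed
  define G where "G \<omega> = (\<Sum>i<m. v $ i * a i \<omega>)" for \<omega>
  have Gm[measurable]: "G \<in> borel_measurable M" unfolding G_def by measurable
  have Gi: "integrable M G" unfolding G_def by (simp add: ai)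
  have G2i: "integrable M (\<lambda>\<omega>. (G \<omega>)\<^sup>2)"
    unfolding G_def power2_eq_square sum_product
  proof (intro Bochner_Integration.integrable_sum)
    fix i l
    show "integrable M (\<lambda>\<omega>. v $ i * a i \<omega> * (v $ l * a l \<omega>))"
    proof (rule intb)
      fix \<omega>
      have "\<bar>v $ i\<bar> * \<bar>a i \<omega>\<bar> * (\<bar>v $ l\<bar> * \<bar>a l \<omega>\<bar>) \<le> \<bar>v $ i\<bar> * sqrt 2 * (\<bar>v $ l\<bar> * sqrt 2)"
        by (intro mult_mono mult_left_mono ab) auto
      thus "\<bar>v $ i * a i \<omega> * (v $ l * a l \<omega>)\<bar> \<le> \<bar>v $ i\<bar> * sqrt 2 * (\<bar>v $ l\<bar> * sqrt 2)"
        by (simp add: abs_mult)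
    qed measurable
  qed
  have EG: "expectation G = (\<Sum>i<m. v $ i * \<mu> i)"
    unfolding G_def \<mu>_def by (simp add: ai)
  have HG: "H \<omega> = G \<omega> - expectation G" for \<omega>
    unfolding H_def G_def EG by (simp add: algebra_simps sum_subtractf)
  have step3: "expectation (\<lambda>\<omega>. (H \<omega>)\<^sup>2) \<le> expectation (\<lambda>\<omega>. (G \<omega>)\<^sup>2)"
    unfolding HG using variance_eq[OF Gi G2i] by simp
  define g where "g x = (\<Sum>i<m. v $ i * cos_basis (Suc i) x)" for x
  have gm[measurable]: "g \<in> borel_measurable borel" unfolding g_def by measurable
  have Gg: "G \<omega> = g (X \<omega>)" for \<omega> unfolding G_def g_def a_def ..
  have step4: "expectation (\<lambda>\<omega>. (G \<omega>)\<^sup>2) = (LINT x|lborel. (indicator {0..1} x * cos_series \<beta> x) * (g x)\<^sup>2)"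
    unfolding Gg
    by (rule distributed_integral[OF d, of "\<lambda>x. (g x)\<^sup>2", symmetric]) (use nn in \<open>auto simp: indicator_def\<close>)
  define q where "q x = indicator {0..1} x * (g x)\<^sup>2" for x :: real
  have qsum: "q x = (\<Sum>i<m. \<Sum>l<m. v $ i * v $ l * (indicator {0..1} x * (cos_basis (Suc i) x * cos_basis (Suc l) x)))" for x
    unfolding q_def g_def power2_eq_square sum_product by (simp add: sum_distrib_left mult_ac)
  have ortho_i: "integrable lborel (\<lambda>x. indicator {0..1} x * (cos_basis (Suc i) x * cos_basis (Suc l) x))" for i l
  proof -
    have "continuous_on {0..1} (\<lambda>x. cos_basis (Suc i) x * cos_basis (Suc l) x)"
      unfolding cos_basis_def by (auto intro!: continuous_intros)
    from borel_integrable_atLeastAtMost'[OF this] show ?thesis by (simp add: set_integrable_def)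
  qed
  have qi: "integrable lborel q" unfolding qsum by (intro Bochner_Integration.integrable_sum Bochner_Integration.integrable_mult_right ortho_i)
  have qint: "(LINT x|lborel. q x) = S"
  proof -
    have "(LINT x|lborel. q x) = (\<Sum>i<m. \<Sum>l<m. v $ i * v $ l * (if i = l then 1 else 0))"
      unfolding qsum by (simp add: ortho_i cos_basis_orth)
    also have "\<dots> = S" unfolding S_def by (simp add: power2_eq_square if_distrib sum.delta cong: if_cong)
    finally show ?thesis .
  qed
  have step5: "(LINT x|lborel. (indicator {0..1} x * cos_series \<beta> x) * (g x)\<^sup>2) \<le> (LINT x|lborel. P * q x)"
  proof (rule integral_mono)
    show "integrable lborel (\<lambda>x. P * q x)" using qi by simp
    show "integrable lborel (\<lambda>x. indicator {0..1} x * cos_series \<beta> x * (g x)\<^sup>2)"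
    proof (rule Bochner_Integration.integrable_bound[OF \<open>integrable lborel (\<lambda>x. P * q x)\<close>])
      show "(\<lambda>x. indicator {0..1} x * cos_series \<beta> x * (g x)\<^sup>2) \<in> borel_measurable lborel" by measurable
      show "AE x in lborel. norm (indicator {0..1} x * cos_series \<beta> x * (g x)\<^sup>2) \<le> norm (P * q x)"
      proof (rule AE_I2)
        fix x
        have "\<bar>cos_series \<beta> x\<bar> * (indicator {0..1} x * (g x)\<^sup>2) \<le> P * (indicator {0..1} x * (g x)\<^sup>2)"
          by (rule mult_right_mono[OF pb]) auto
        moreover have "0 \<le> P" using pb[of x] by linarith
        ultimately show "norm (indicator {0..1} x * cos_series \<beta> x * (g x)\<^sup>2) \<le> norm (P * q x)"
          unfolding q_def by (auto simp: abs_mult indicator_def)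
      qed
    qed
    fix x
    show "indicator {0..1} x * cos_series \<beta> x * (g x)\<^sup>2 \<le> P * q x"
      using pb[of x] unfolding q_def by (auto simp: indicator_def intro!: mult_right_mono)
  qed
  have main: "e * S \<le> P * S"
    using step1 step2 step3 step4 step5 qint by simp
  have Spos: "S > 0"
  proof -
    obtain i where i: "i < m" "v $ i \<noteq> 0" using v(1,2) by (auto simp: vec_eq_iff)
    have "0 < (v $ i)\<^sup>2" using i by simp
    also have "\<dots> \<le> S" unfolding S_def using i by (intro member_le_sum) auto
    finally show ?thesis .
  qed
  show ?thesis using main Spos by simp
qed

theorem mainTheorem14:
  fixes M :: "'a measure" and X :: "'a \<Rightarrow> real" and \<beta> :: "nat \<Rightarrow> real"
    and \<gamma> C :: real
  assumes "prob_space M"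
    and "\<gamma> > 1/2" and "C > 0"
    and "\<beta> \<in> sobolev_ball \<gamma> C"
    and "\<forall>x\<in>{0..1}. cos_series \<beta> x \<ge> 0"
    and "distributed M lborel X (\<lambda>x. ennreal (indicator {0..1} x * cos_series \<beta> x))"
  shows "limsup (\<lambda>k. ereal (largest_eigenvalue
            (cos_cov_mat M X (nat \<lfloor>real (Suc k) powr (1 / (2 * \<gamma> + 1))\<rfloor>)))) < \<infinity>"
proof -
  define P where "P = 1 + sqrt 2 * (\<Sum>j. \<bar>\<beta> (Suc j)\<bar>)"
  have pb: "\<And>x. \<bar>cos_series \<beta> x\<bar> \<le> P"
    unfolding P_def by (rule cos_series_bound[OF sobolev_abs_summable[OF assms(2,4)]])
  define B where "B = max P (Max ({}::real set))"
  have le: "largest_eigenvalue (cos_cov_mat M X m) \<le> B" for m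
    unfolding largest_eigenvalue_def B_def
    by (rule Max_bound_any) (use eig_bound[OF assms(1) assms(6) assms(5) pb] in blast)
  have "limsup (\<lambda>k. ereal (largest_eigenvalue
            (cos_cov_mat M X (nat \<lfloor>real (Suc k) powr (1 / (2 * \<gamma> + 1))\<rfloor>)))) \<le> ereal B"
    by (rule Limsup_bounded) (simp add: le)
  also have "\<dots> < \<infinity>" by simp
  finally show ?thesis .
qed

end
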